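(* Let $X'\in\lambda\mathrm{Der}(\mathcal{B})[[\lambda]]$ be such that $\exp(X')\phi_0'(\mathcal{A}'[[\lambda]])\subseteq C$. Then (i) the map $\exp(X')\phi_0':\mathcal{A}'[[\lambda]]\to C$ is a ring isomorphism; (ii) there is a unique Poisson structure $\pi'$ on $\mathcal{A}'[[\lambda]]$ such that $\Phi'=\exp(X')\phi_0':(\mathcal{A}'[[\lambda]],\pi')\to(\mathcal{B}[[\lambda]],\sigma)$ is a Poisson morphism.
   Context: $\mathbb{K}$ is a field of characteristic zero. $\mathcal{A},\mathcal{B}$ are commutative $\mathbb{K}$-algebras with Poisson brackets $\pi_0=\{\cdot,\cdot\}_{\mathcal{A}}$, $\sigma_0=\{\cdot,\cdot\}_{\mathcal{B}}$, and $\phi_0:\mathcal{A}\to\mathcal{B}$ is a Poisson morphism. $\pi$ and $\sigma$ are formal Poisson deformations of $\pi_0,\sigma_0$ (i.e. $\mathbb{K}[[\lambda]]$-bilinear Poisson brackets on $\mathcal{A}[[\lambda]]$, $\mathcal{B}[[\lambda]]$ with zeroth-order terms $\pi_0,\sigma_0$), and $\Phi:(\mathcal{A}[[\lambda]],\pi)\to(\mathcal{B}[[\lambda]],\sigma)$ is a $\mathbb{K}[[\lambda]]$-linear Poisson morphism (of commutative algebras and brackets) with zeroth-order term $\phi_0$. $\mathcal{A}'=\{b\in\mathcal{B}:\{b,\phi_0(a)\}_{\mathcal{B}}=0\ \forall a\in\mathcal{A}\}$ is the Poisson commutant, with its induced bracket $\pi_0'$, and $\phi_0':\mathcal{A}'\to\mathcal{B}$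 is the inclusion (extended $\lambda$-linearly). $C=\{b\in\mathcal{B}[[\lambda]]:\sigma(b,\Phi(a))=0\ \forall a\in\mathcal{A}[[\lambda]]\}$. For $X'\in\lambda\mathrm{Der}(\mathcal{B})[[\lambda]]$, $\exp(X')=\sum_n(X')^n/n!$. *)

theory Defs
  imports "HOL-Computational_Algebra.Formal_Power_Series"
begin

text \<open>A commutative K-algebra is a commutative ring together with
its structure map e from K (a unital ring homomorphism).\<close>

definition kalg_map :: "('k::field \<Rightarrow> 'r::comm_ring_1) \<Rightarrow> bool" where
  "kalg_map e \<longleftrightarrow> e 0 = 0 \<and> e 1 = 1 \<and> (\<forall>x y. e (x + y) = e x + e y) \<and>
                   (\<forall>x y. e (x * y) = e x * e y)"

definition fps_map :: "('a::zero \<Rightarrow> 'b::zero) \<Rightarrow> 'a fps \<Rightarrow> 'b fps" where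
  "fps_map h f = Abs_fps (\<lambda>n. h (fps_nth f n))"

definition poisson_on ::
  "'r::comm_ring_1 set \<Rightarrow> ('c \<Rightarrow> 'r) \<Rightarrow> ('r \<Rightarrow> 'r \<Rightarrow> 'r) \<Rightarrow> bool" where
  "poisson_on S scal br \<longleftrightarrow>
     (\<forall>x\<in>S. \<forall>y\<in>S. br x y \<in> S) \<and>
     (\<forall>x\<in>S. \<forall>y\<in>S. \<forall>z\<in>S. br (x + y) z = br x z + br y z) \<and>
     (\<forall>c. \<forall>x\<in>S. \<forall>y\<in>S. br (scal c * x) y = scal c * br x y) \<and>
     (\<forall>x\<in>S. \<forall>y\<in>S. br x y = - br y x) \<and>
     (\<forall>x\<in>S. \<forall>y\<in>S. \<forall>z\<in>S. br x (br y z) + br y (br z x) + br z (br x y) = 0) \<and>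
     (\<forall>x\<in>S. \<forall>y\<in>S. \<forall>z\<in>S. br x (y * z) = br x y * z + y * br x z)"

abbreviation poisson :: "('k::field \<Rightarrow> 'r::comm_ring_1) \<Rightarrow> ('r \<Rightarrow> 'r \<Rightarrow> 'r) \<Rightarrow> bool" where
  "poisson e br \<equiv> poisson_on UNIV e br"

abbreviation fpoisson :: "('k::field \<Rightarrow> 'r::comm_ring_1) \<Rightarrow> ('r fps \<Rightarrow> 'r fps \<Rightarrow> 'r fps) \<Rightarrow> bool" where
  "fpoisson e br \<equiv> poisson_on UNIV (fps_map e) br"

definition alg_hom :: "('c \<Rightarrow> 'r::comm_ring_1) \<Rightarrow> ('c \<Rightarrow> 's::comm_ring_1) \<Rightarrow> ('r \<Rightarrow> 's) \<Rightarrow> bool" where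
  "alg_hom eR eS h \<longleftrightarrow> h 1 = 1 \<and> (\<forall>x y. h (x + y) = h x + h y) \<and>
     (\<forall>x y. h (x * y) = h x * h y) \<and> (\<forall>c x. h (eR c * x) = eS c * h x)"

definition poisson_hom ::
  "('c \<Rightarrow> 'r::comm_ring_1) \<Rightarrow> ('c \<Rightarrow> 's::comm_ring_1) \<Rightarrow> ('r \<Rightarrow> 'r \<Rightarrow> 'r) \<Rightarrow> ('s \<Rightarrow> 's \<Rightarrow> 's)
    \<Rightarrow> ('r \<Rightarrow> 's) \<Rightarrow> bool" where
  "poisson_hom eR eS brR brS h \<longleftrightarrow> alg_hom eR eS h \<and> (\<forall>x y. h (brR x y) = brS (h x) (h y))"

definition is_derivation :: "('k \<Rightarrow> 'r::comm_ring_1) \<Rightarrow> ('r \<Rightarrow> 'r) \<Rightarrow> bool" where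
  "is_derivation e D \<longleftrightarrow> (\<forall>x y. D (x + y) = D x + D y) \<and> (\<forall>c x. D (e c * x) = e c * D x) \<and>
     (\<forall>x y. D (x * y) = D x * y + x * D y)"

text \<open>An element X' = \<Sum>n\<ge>1 \<lambda>^n D_n of \<lambda>Der(B)[[\<lambda>]] is given by the sequence D
of its coefficients, with D 0 = 0 and each D n a derivation.\<close>
definition lambda_der :: "('k \<Rightarrow> 'r::comm_ring_1) \<Rightarrow> (nat \<Rightarrow> 'r \<Rightarrow> 'r) \<Rightarrow> bool" where
  "lambda_der e D \<longleftrightarrow> D 0 = (\<lambda>x. 0) \<and> (\<forall>n. is_derivation e (D n))"

definition der_apply :: "(nat \<Rightarrow> 'r::comm_ring_1 \<Rightarrow> 'r) \<Rightarrow> 'r fps \<Rightarrow> 'r fps" where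
  "der_apply D f = Abs_fps (\<lambda>n. \<Sum>i\<le>n. D i (fps_nth f (n - i)))"

text \<open>exp(X') = \<Sum>k (X')^k / k!; since (X')^k raises the \<lambda>-order by k, the
coefficient of \<lambda>^n only involves k \<le> n.\<close>
definition der_exp :: "('k::field_char_0 \<Rightarrow> 'r::comm_ring_1) \<Rightarrow> (nat \<Rightarrow> 'r \<Rightarrow> 'r) \<Rightarrow> 'r fps \<Rightarrow> 'r fps" where
  "der_exp e D f = Abs_fps (\<lambda>n. \<Sum>k\<le>n. e (inverse (fact k)) * fps_nth ((der_apply D ^^ k) f) n)"

definition poisson_commutant :: "('b \<Rightarrow> 'b \<Rightarrow> 'b::zero) \<Rightarrow> ('a \<Rightarrow> 'b) \<Rightarrow> 'b set" where
  "poisson_commutant brB phi = {b. \<forall>a. brB b (phi a) = 0}"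

definition fps_over :: "'b::zero set \<Rightarrow> 'b fps set" where
  "fps_over S = {f. \<forall>n. fps_nth f n \<in> S}"

end

theory Submission
  imports Defs
begin
unbundle fps_syntax



lemma pascal_sum:
  fixes A B :: "nat \<Rightarrow> 'a::comm_ring_1"
  shows "(\<Sum>k\<le>n. of_nat (n choose k) * A (k+1) * B (n-k)) +
      (\<Sum>k\<le>n. of_nat (n choose k) * A k * B (n - k + 1))
    = (\<Sum>k\<le>n+1. of_nat (n + 1 choose k) * A k * B (n + 1 - k))"
proof -
  have decomp: "{0..n+1} = {0} \<union> {n + 1} \<union> {1..n}" 
    by auto
  have "(\<Sum>k\<le>n. of_nat (n choose k) * A (k+1) * B (n-k)) +
      (\<Sum>k\<le>n. of_nat (n choose k) * A k * B (n - k + 1)) = (\<Sum>k\<le>n. of_nat (n choose k) * A k * B (n + 1 - k)) +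
      (\<Sum>k=1..n+1. of_nat (n choose (k - 1)) * A k * B (n + 1 - k))"
    by (simp add: atMost_atLeast0 sum.shift_bounds_cl_Suc_ivl Suc_diff_le field_simps del: sum.cl_ivl_Suc)
  also have "\<dots> = B (n + 1) * A 0 +
      (\<Sum>k=1..n. of_nat (n choose k) * A k * B (n + 1 - k)) + (A (n + 1) * B 0 +
      (\<Sum>k=1..n. of_nat (n choose (k - 1)) * A k * B (n + 1 - k)))"
      using sum.nat_ivl_Suc' [of 1 n "\<lambda>k. of_nat (n choose (k-1)) * A k * B (n + 1 - k)"]
    by (simp add: sum.atLeast_Suc_atMost atMost_atLeast0)
  also have "\<dots> = A (n + 1) * B 0 + B (n + 1) * A 0 +
      (\<Sum>k=1..n. of_nat (n + 1 choose k) * A k * B (n + 1 - k))"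
    by (auto simp add: field_simps sum.distrib [symmetric] choose_reduce_nat)
  also have "\<dots> = (\<Sum>k\<le>n+1. of_nat (n + 1 choose k) * A k * B (n + 1 - k))"
    using decomp by (simp add: atMost_atLeast0 field_simps)
  finally show ?thesis .
qed




lemma kalg_of_nat: "kalg_map e \<Longrightarrow> e (of_nat n) = of_nat n"
  by (induction n) (auto simp: kalg_map_def)

lemma kalg_mult: "kalg_map e \<Longrightarrow> e (x * y) = e x * e y"
  by (simp add: kalg_map_def)

locale dctx =
  fixes e :: "'k::field_char_0 \<Rightarrow> 'b::comm_ring_1" and D :: "nat \<Rightarrow> 'b \<Rightarrow> 'b"
  assumes alg: "kalg_map e" and ld: "lambda_der e D"
begin

lemma D_add: "D i (x + y) = D i x + D i y"
  using ld unfolding lambda_der_def is_derivation_def by blast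
lemma D_mult: "D i (x * y) = D i x * y + x * D i y"
  using ld unfolding lambda_der_def is_derivation_def by blast
lemma D_scal: "D i (e c * x) = e c * D i x"
  using ld unfolding lambda_der_def is_derivation_def by blast
lemma D0: "D 0 x = 0"
  using ld by (simp add: lambda_der_def)
lemma D_zero: "D i 0 = 0"
  using D_add[of i 0 0] by simp
lemma D_sum: "D i (sum F A) = (\<Sum>a\<in>A. D i (F a))"
  by (induction A rule: infinite_finite_induct) (auto simp: D_zero D_add)
lemma D_one: "D i 1 = 0"
  using D_mult[of i 1 1] by simp
lemma D_e: "D i (e c) = 0"
  using D_scal[of i c 1] D_one by simp

abbreviation d where "d \<equiv> der_apply D"

lemma d_nth: "d f $ n = (\<Sum>i\<le>n. D i (f $ (n - i)))"
  by (simp add: der_apply_def)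

lemma d_add: "d (f + g) = d f + d g"
  by (rule fps_ext) (simp add: d_nth D_add sum.distrib)

lemma d_zero: "d 0 = 0"
  using d_add[of 0 0] by simp

lemma d_neg: "d (- f) = - d f"
  using d_add[of f "-f"] d_zero by (simp add: add.inverse_unique)

lemma d_diff: "d (f - g) = d f - d g"
  using d_add[of f "-g"] d_neg by simp

lemma d_sum: "d (sum F A) = (\<Sum>a\<in>A. d (F a))"
  by (induction A rule: infinite_finite_induct) (auto simp: d_zero d_add)

lemma d_of_nat: "d (of_nat m * F) = of_nat m * d F"
  by (induction m) (auto simp: d_zero d_add algebra_simps)

definition Dm :: "nat \<Rightarrow> 'b fps \<Rightarrow> 'b fps" where
  "Dm i f = Abs_fps (\<lambda>n. D i (f $ n))"

lemma Dm_mult: "Dm i (f * g) = Dm i f * g + f * Dm i g"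
  by (rule fps_ext) (simp add: Dm_def fps_mult_nth D_sum D_mult sum.distrib)

definition T :: "nat \<Rightarrow> 'b fps \<Rightarrow> 'b fps" where
  "T N f = (\<Sum>i\<le>N. fps_X ^ i * Dm i f)"

lemma T_mult: "T N (f * g) = T N f * g + f * T N g"
  by (simp add: T_def Dm_mult sum_distrib_left sum_distrib_right sum.distrib algebra_simps)

lemma T_nth: "n \<le> N \<Longrightarrow> T N f $ n = d f $ n"
proof -
  assume nN: "n \<le> N"
  have "T N f $ n = (\<Sum>i\<le>N. if n < i then 0 else D i (f $ (n - i)))"
    unfolding T_def fps_sum_nth fps_X_power_mult_nth Dm_def fps_nth_Abs_fps by simp
  also have "\<dots> = (\<Sum>i\<le>n. if n < i then 0 else D i (f $ (n - i)))"
    using nN by (intro sum.mono_neutral_right) auto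
  also have "\<dots> = d f $ n" by (simp add: d_nth)
  finally show ?thesis .
qed

lemma mult_agree:
  assumes "\<And>m. m \<le> n \<Longrightarrow> F $ m = G $ m"
  shows "(F * H) $ n = (G * H) $ n"
  using assms by (simp add: fps_mult_nth)

lemma d_mult: "d (f * g) = d f * g + f * d g"
proof (rule fps_ext)
  fix n
  have "d (f * g) $ n = T n (f * g) $ n" by (simp add: T_nth)
  also have "\<dots> = (T n f * g) $ n + (f * T n g) $ n" by (simp add: T_mult)
  also have "(T n f * g) $ n = (d f * g) $ n"
    by (rule mult_agree) (simp add: T_nth)
  also have "(f * T n g) $ n = (f * d g) $ n"
    using mult_agree[of n "T n g" "d g" f] by (simp add: T_nth mult.commute)
  finally show "d (f * g) $ n = (d f * g + f * d g) $ n" by simp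
qed

lemma d_one: "d 1 = 0"
  using d_mult[of 1 1] by simp

lemma d_scal: "d (fps_map e c) = 0"
  by (rule fps_ext) (simp add: d_nth fps_map_def D_e)

end



context dctx begin

lemma d_order: "(\<forall>m<j. f $ m = 0) \<Longrightarrow> \<forall>m<Suc j. d f $ m = 0"
proof (intro allI impI)
  fix m assume h: "\<forall>m<j. f $ m = 0" and m: "m < Suc j"
  have "d f $ m = (\<Sum>i\<le>m. D i (f $ (m - i)))" by (rule d_nth)
  also have "\<dots> = 0"
  proof (rule sum.neutral, intro ballI)
    fix i assume "i \<in> {..m}"
    show "D i (f $ (m - i)) = 0"
    proof (cases i)
      case 0 then show ?thesis by (simp add: D0)
    next
      case (Suc i') then have "m - i < j" using m \<open>i \<in> {..m}\<close> by auto
      then show ?thesis using h by (simp add: D_zero)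
    qed
  qed
  finally show "d f $ m = 0" .
qed

lemma dpow_order: "(\<forall>m<j. f $ m = 0) \<Longrightarrow> \<forall>m<j+k. (d ^^ k) f $ m = 0"
proof (induction k)
  case 0 then show ?case by simp
next
  case (Suc k)
  then have "\<forall>m<Suc (j+k). d ((d ^^ k) f) $ m = 0" by (intro d_order) auto
  then show ?case by simp
qed

lemma dpow_order0: "m < k \<Longrightarrow> (d ^^ k) f $ m = 0"
  using dpow_order[of 0 f k] by simp

lemma dpow_add: "(d ^^ k) (f + g) = (d ^^ k) f + (d ^^ k) g"
  by (induction k) (auto simp: d_add)

lemma dpow_zero: "(d ^^ k) 0 = 0"
  by (induction k) (auto simp: d_zero)

lemma dpow_diff: "(d ^^ k) (f - g) = (d ^^ k) f - (d ^^ k) g"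
  by (induction k) (auto simp: d_diff)

lemma dpow_fix: "d F = 0 \<Longrightarrow> k > 0 \<Longrightarrow> (d ^^ k) F = 0"
proof (induction k)
  case 0 then show ?case by simp
next
  case (Suc k) then show ?case by (cases k) (auto simp: d_zero)
qed

lemma leibniz: "(d ^^ k) (f * g) = (\<Sum>j\<le>k. of_nat (k choose j) * (d ^^ j) f * (d ^^ (k - j)) g)"
proof (induction k)
  case 0 then show ?case by simp
next
  case (Suc k)
  let ?A = "\<lambda>j. (d ^^ j) f" and ?B = "\<lambda>j. (d ^^ j) g"
  have "(d ^^ Suc k) (f * g) = d (\<Sum>j\<le>k. of_nat (k choose j) * (?A j * ?B (k - j)))"
    using Suc by (simp add: mult.assoc)
  also have "\<dots> = (\<Sum>j\<le>k. of_nat (k choose j) * (?A (j+1) * ?B (k - j) + ?A j * ?B (k - j + 1)))"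
    by (simp only: d_sum d_of_nat) (simp add: d_mult)
  also have "\<dots> = (\<Sum>j\<le>k. of_nat (k choose j) * ?A (j+1) * ?B (k - j)) +
      (\<Sum>j\<le>k. of_nat (k choose j) * ?A j * ?B (k - j + 1))"
    by (simp add: sum.distrib algebra_simps)
  also have "\<dots> = (\<Sum>j\<le>k+1. of_nat (k + 1 choose j) * ?A j * ?B (k + 1 - j))"
    by (rule pascal_sum)
  finally show ?case by simp
qed

abbreviation E where "E \<equiv> der_exp e D"
abbreviation c where "c k \<equiv> e (inverse (fact k))"

lemma E_nth: "E f $ n = (\<Sum>k\<le>n. c k * (d ^^ k) f $ n)"
  by (simp add: der_exp_def)

lemma e1: "e 1 = 1"
  using alg by (simp add: kalg_map_def)
lemma c0: "c 0 = 1"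
  using alg by (simp add: kalg_map_def)

lemma E_add: "E (f + g) = E f + E g"
  by (rule fps_ext) (simp add: E_nth dpow_add sum.distrib distrib_left)

lemma E_diff: "E (f - g) = E f - E g"
  by (rule fps_ext) (simp add: E_nth dpow_diff sum_subtractf right_diff_distrib)

lemma E_zero: "E 0 = 0"
  by (rule fps_ext) (simp add: E_nth dpow_zero)

lemma sum_only0:
  assumes "\<And>k. k \<noteq> 0 \<Longrightarrow> k \<le> n \<Longrightarrow> F k = (0::'b)"
  shows "(\<Sum>k\<le>(n::nat). F k) = F 0"
proof -
  have "(\<Sum>k\<le>n. F k) = (\<Sum>k\<in>{0}. F k)"
    using assms by (intro sum.mono_neutral_right) auto
  then show ?thesis by simp
qed

lemma E_low:
  assumes h: "\<forall>m<j. f $ m = 0"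
  shows "(\<forall>m<j. E f $ m = 0) \<and> E f $ j = f $ j"
proof
  show "\<forall>m<j. E f $ m = 0"
  proof (intro allI impI)
    fix m assume "m < j"
    then show "E f $ m = 0"
      unfolding E_nth using dpow_order[OF h] by (intro sum.neutral) auto
  qed
  have "E f $ j = c 0 * (d ^^ 0) f $ j"
    unfolding E_nth using dpow_order[OF h] by (intro sum_only0) auto
  then show "E f $ j = f $ j" by (simp add: e1)
qed

lemma E_inj: "E f = E g \<Longrightarrow> f = g"
proof (rule ccontr)
  assume eq: "E f = E g" and ne: "f \<noteq> g"
  define h where "h = f - g"
  have "h \<noteq> 0" using ne by (simp add: h_def)
  have "E h = 0" using eq by (simp add: h_def E_diff)
  have "\<forall>m<subdegree h. h $ m = 0" by (simp add: nth_less_subdegree_zero)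
  from E_low[OF this] have "E h $ subdegree h = h $ subdegree h" by blast
  then show False using \<open>E h = 0\<close> \<open>h \<noteq> 0\<close> by simp
qed

lemma E_fix: "d F = 0 \<Longrightarrow> E F = F"
proof (rule fps_ext)
  fix n assume "d F = 0"
  have "E F $ n = c 0 * (d ^^ 0) F $ n"
    unfolding E_nth using dpow_fix[OF \<open>d F = 0\<close>] by (intro sum_only0) auto
  then show "E F $ n = F $ n" by (simp add: e1)
qed

lemma E_one: "E 1 = 1" by (rule E_fix[OF d_one])
lemma E_scal: "E (fps_map e a) = fps_map e a" by (rule E_fix[OF d_scal])

lemma mult_order:
  assumes "\<forall>m<a. F $ m = 0" "\<forall>m<b. G $ m = 0" "m < a + b"
  shows "(F * G) $ m = (0::'b)"
  unfolding fps_mult_nth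
proof (rule sum.neutral, intro ballI)
  fix i assume "i \<in> {0..m}"
  show "F $ i * G $ (m - i) = 0"
  proof (cases "i < a")
    case True then show ?thesis using assms by simp
  next
    case False then have "m - i < b" using assms(3) \<open>i \<in> {0..m}\<close> by auto
    then show ?thesis using assms by simp
  qed
qed

lemma coef_id: "j \<le> k \<Longrightarrow> c k * of_nat (k choose j) = c j * c (k - j)"
proof -
  assume jk: "j \<le> k"
  have "inverse (fact k) * (of_nat (k choose j) :: 'k) = inverse (fact j) * inverse (fact (k - j))"
    using jk by (simp add: binomial_fact field_simps)
  then have "e (inverse (fact k) * of_nat (k choose j)) = e (inverse (fact j) * inverse (fact (k - j)))"
    by simp
  then show ?thesis using alg by (simp add: kalg_mult kalg_of_nat)
qed

lemma E_trunc: "p \<le> n \<Longrightarrow> (\<Sum>j\<le>n. fps_const (c j) * (d ^^ j) f) $ p = E f $ p"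
proof -
  assume pn: "p \<le> n"
  have "(\<Sum>j\<le>n. fps_const (c j) * (d ^^ j) f) $ p = (\<Sum>j\<le>n. c j * (d ^^ j) f $ p)"
    by (simp add: fps_sum_nth)
  also have "\<dots> = (\<Sum>j\<le>p. c j * (d ^^ j) f $ p)"
    using pn by (intro sum.mono_neutral_right) (auto simp: dpow_order0)
  finally show ?thesis by (simp add: E_nth)
qed

lemma E_mult: "E (f * g) = E f * E g"
proof (rule fps_ext)
  fix n
  let ?A = "\<lambda>j. (d ^^ j) f" and ?B = "\<lambda>j. (d ^^ j) g"
  define Ef where "Ef = (\<Sum>j\<le>n. fps_const (c j) * ?A j)"
  define Eg where "Eg = (\<Sum>j\<le>n. fps_const (c j) * ?B j)"
  have "(E f * E g) $ n = (Ef * E g) $ n"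
    by (rule mult_agree) (simp add: Ef_def E_trunc)
  also have "\<dots> = (Ef * Eg) $ n"
    using mult_agree[of n "E g" Eg Ef] by (simp add: Eg_def E_trunc mult.commute)
  also have "Ef * Eg = (\<Sum>j\<le>n. \<Sum>l\<le>n. fps_const (c j * c l) * (?A j * ?B l))"
    unfolding Ef_def Eg_def sum_product fps_const_mult[symmetric] by (simp add: mult_ac del: fps_const_mult)
  also have "\<dots> $ n = (\<Sum>j\<le>n. \<Sum>l\<le>n. c j * c l * (?A j * ?B l) $ n)"
    by (simp add: fps_sum_nth)
  also have "\<dots> = (\<Sum>(j,l)\<in>{..n} \<times> {..n}. c j * c l * (?A j * ?B l) $ n)"
    by (rule sum.cartesian_product)
  also have "\<dots> = (\<Sum>(j,l)\<in>{(j,l). j + l \<le> n}. c j * c l * (?A j * ?B l) $ n)"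
  proof (rule sum.mono_neutral_right)
    show "finite ({..n} \<times> {..n})" by simp
    show "{(j,l). j + l \<le> n} \<subseteq> {..n} \<times> {..n}" by auto
    show "\<forall>x\<in>{..n} \<times> {..n} - {(j,l). j + l \<le> n}. (case x of (j,l) \<Rightarrow> c j * c l * (?A j * ?B l) $ n) = 0"
    proof
      fix x assume "x \<in> {..n} \<times> {..n} - {(j,l). j + l \<le> n}"
      then obtain j l where x: "x = (j,l)" "n < j + l" by auto
      have "(?A j * ?B l) $ n = 0"
        by (rule mult_order[of j _ l]) (auto simp: dpow_order0 x)
      then show "(case x of (j,l) \<Rightarrow> c j * c l * (?A j * ?B l) $ n) = 0" by (simp add: x)
    qed
  qed
  also have "\<dots> = (\<Sum>k\<le>n. \<Sum>j\<le>k. c j * c (k - j) * (?A j * ?B (k - j)) $ n)"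
    by (rule sum.triangle_reindex_eq)
  also have "\<dots> = (\<Sum>k\<le>n. \<Sum>j\<le>k. c k * of_nat (k choose j) * (?A j * ?B (k - j)) $ n)"
    by (intro sum.cong refl) (simp add: coef_id)
  also have "\<dots> = E (f * g) $ n"
    unfolding E_nth leibniz
    by (simp add: fps_sum_nth sum_distrib_left fps_of_nat mult.assoc)
  finally show "E (f * g) $ n = (E f * E g) $ n" by simp
qed

end



context dctx begin

lemma E_surj:
  assumes EC: "\<And>f. f \<in> fps_over P \<Longrightarrow> E f \<in> C"
    and Cdiff: "\<And>x z. x \<in> C \<Longrightarrow> z \<in> C \<Longrightarrow> x - z \<in> C"
    and Cshift: "\<And>n h. fps_X ^ n * h \<in> C \<Longrightarrow> h \<in> C"
    and C0: "\<And>h. h \<in> C \<Longrightarrow> h $ 0 \<in> P"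
    and Padd: "\<And>f g. f \<in> fps_over P \<Longrightarrow> g \<in> fps_over P \<Longrightarrow> f + g \<in> fps_over P"
    and PX: "\<And>n a. a \<in> P \<Longrightarrow> fps_X ^ n * fps_const a \<in> fps_over P"
    and P0: "0 \<in> fps_over P"
    and yC: "y \<in> C"
  shows "\<exists>b\<in>fps_over P. E b = y"
proof -
  define t where "t = rec_nat 0 (\<lambda>n tn. tn + fps_X ^ n * fps_const ((y - E tn) $ n))"
  have t0: "t 0 = 0" by (simp add: t_def)
  have tS: "t (Suc n) = t n + fps_X ^ n * fps_const ((y - E (t n)) $ n)" for n
    by (simp add: t_def)
  have inv: "t n \<in> fps_over P \<and> (\<forall>m<n. (y - E (t n)) $ m = 0)" for n
  proof (induction n)
    case 0 then show ?case using P0 by (simp add: t0)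
  next
    case (Suc n)
    define r where "r = y - E (t n)"
    have rC: "r \<in> C" unfolding r_def using Suc EC yC Cdiff by blast
    have rz: "\<forall>m<n. r $ m = 0" using Suc by (simp add: r_def)
    define h where "h = Abs_fps (\<lambda>m. r $ (m + n))"
    have "r = fps_X ^ n * h"
      by (rule fps_ext) (simp add: h_def fps_X_power_mult_nth rz)
    then have "h \<in> C" using rC Cshift by metis
    then have "h $ 0 \<in> P" by (rule C0)
    then have rnP: "r $ n \<in> P" by (simp add: h_def)
    have t1: "t (Suc n) \<in> fps_over P"
      unfolding tS using Suc rnP Padd PX unfolding r_def by blast
    have lowX: "\<forall>m<n. (fps_X ^ n * fps_const (r $ n)) $ m = 0"
      by (simp add: fps_X_power_mult_nth)
    note EL = E_low[OF lowX]
    have "\<forall>m<Suc n. (y - E (t (Suc n))) $ m = 0"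
    proof (intro allI impI)
      fix m assume "m < Suc n"
      have "y - E (t (Suc n)) = r - E (fps_X ^ n * fps_const (r $ n))"
        by (simp add: tS E_add r_def)
      moreover have "(r - E (fps_X ^ n * fps_const (r $ n))) $ m = 0"
      proof (cases "m < n")
        case True then show ?thesis using EL rz by simp
      next
        case False then have "m = n" using \<open>m < Suc n\<close> by simp
        then show ?thesis using EL by (simp add: fps_X_power_mult_nth)
      qed
      ultimately show "(y - E (t (Suc n))) $ m = 0" by simp
    qed
    then show ?case using t1 by simp
  qed
  have stab': "t k $ m = t (Suc m) $ m" if "m < k" for m k
    using that
  proof (induction k)
    case 0 then show ?case by simp
  next
    case (Suc k)
    show ?case
    proof (cases "m < k")
      case True then show ?thesis using Suc by (simp add: tS fps_X_power_mult_nth)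
    next
      case False then have "k = m" using Suc by simp
      then show ?thesis by simp
    qed
  qed
  define b where "b = Abs_fps (\<lambda>m. t (Suc m) $ m)"
  have bP: "b \<in> fps_over P"
    using inv unfolding fps_over_def b_def by simp
  have "E b = y"
  proof (rule fps_ext)
    fix n
    have "\<forall>m<Suc n. (b - t (Suc n)) $ m = 0"
    proof (intro allI impI)
      fix m assume "m < Suc n"
      then have "t (Suc n) $ m = t (Suc m) $ m" by (rule stab')
      then show "(b - t (Suc n)) $ m = 0" by (simp add: b_def)
    qed
    from E_low[OF this] have "E (b - t (Suc n)) $ n = 0" by simp
    then have "E b $ n = E (t (Suc n)) $ n" by (simp add: E_diff)
    also have "\<dots> = y $ n" using inv[of "Suc n"] by simp
    finally show "E b $ n = y $ n" .
  qed
  then show ?thesis using bP by blast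
qed

end



lemma pb_add1: "poisson_on UNIV s br \<Longrightarrow> br (x + y) z = br x z + br y z"
  unfolding poisson_on_def by blast
lemma pb_anti: "poisson_on UNIV s br \<Longrightarrow> br x y = - br y x"
  unfolding poisson_on_def by blast
lemma pb_scal: "poisson_on UNIV s br \<Longrightarrow> br (s c * x) y = s c * br x y"
  unfolding poisson_on_def by blast
lemma pb_jac: "poisson_on UNIV s br \<Longrightarrow> br x (br y z) + br y (br z x) + br z (br x y) = 0"
  unfolding poisson_on_def by blast
lemma pb_leib: "poisson_on UNIV s br \<Longrightarrow> br x (y * z) = br x y * z + y * br x z"
  unfolding poisson_on_def by blast
lemma pb_zero1: "poisson_on UNIV s br \<Longrightarrow> br 0 z = 0"
  using pb_add1[of s br 0 0 z] by simp
lemma pb_zero2: "poisson_on UNIV s br \<Longrightarrow> br z 0 = 0"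
  using pb_zero1[of s br z] pb_anti[of s br z 0] by simp
lemma pb_diff1: "poisson_on UNIV s br \<Longrightarrow> br (x - y) z = br x z - br y z"
  using pb_add1[of s br "x - y" y z] by (simp add: algebra_simps)
lemma pb_mult1: "poisson_on UNIV s br \<Longrightarrow> br (y * z) x = br y x * z + y * br z x"
  using pb_leib[of s br x y z] pb_anti[of s br x "y*z"] pb_anti[of s br x y] pb_anti[of s br x z]
  by (simp add: algebra_simps)

lemma fps_map_X_pow: "kalg_map e \<Longrightarrow> fps_map e (fps_X ^ n) = fps_X ^ n"
  by (rule fps_ext) (simp add: fps_map_def fps_X_power_nth kalg_map_def)

lemma fps_map_X: "kalg_map e \<Longrightarrow> fps_map e fps_X = fps_X"
  using fps_map_X_pow[of e 1] by simp

lemma br_Xpow: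
  assumes "kalg_map e" "poisson_on UNIV (fps_map e) br"
  shows "br (fps_X ^ n * h) g = fps_X ^ n * br h g"
  using pb_scal[OF assms(2), of "fps_X ^ n" h g] fps_map_X_pow[OF assms(1)] by simp

lemma br_0_left:
  assumes "kalg_map e" "poisson_on UNIV (fps_map e) br"
  shows "br f g $ 0 = br (fps_const (f $ 0)) g $ 0"
proof -
  define t where "t = Abs_fps (\<lambda>n. f $ (n + 1))"
  have "f = fps_const (f $ 0) + fps_X ^ 1 * t"
    by (rule fps_ext) (simp add: t_def fps_X_power_mult_nth)
  then have "br f g = br (fps_const (f $ 0)) g + fps_X ^ 1 * br t g"
    using pb_add1[OF assms(2)] br_Xpow[OF assms] by metis
  then show ?thesis by (simp add: fps_X_power_mult_nth)
qed

lemma br_0: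
  assumes "kalg_map e" "poisson_on UNIV (fps_map e) br"
  shows "br f g $ 0 = br (fps_const (f $ 0)) (fps_const (g $ 0)) $ 0"
proof -
  have "br f g $ 0 = br (fps_const (f $ 0)) g $ 0" by (rule br_0_left[OF assms])
  also have "\<dots> = - (br g (fps_const (f $ 0)) $ 0)"
    using pb_anti[OF assms(2)] by (metis fps_neg_nth)
  also have "br g (fps_const (f $ 0)) $ 0 = br (fps_const (g $ 0)) (fps_const (f $ 0)) $ 0"
    by (rule br_0_left[OF assms])
  also have "- \<dots> = br (fps_const (f $ 0)) (fps_const (g $ 0)) $ 0"
    using pb_anti[OF assms(2)] by (metis fps_neg_nth)
  finally show ?thesis .
qed

lemma sum_closed: "(\<And>x y. x \<in> P \<Longrightarrow> y \<in> P \<Longrightarrow> x + y \<in> P) \<Longrightarrow> 0 \<in> P \<Longrightarrow>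
   (\<And>i. i \<in> A \<Longrightarrow> F i \<in> P) \<Longrightarrow> sum F A \<in> P"
  by (induction A rule: infinite_finite_induct) auto

context dctx begin
lemma E_neg: "E (- f) = - E f"
  using E_diff[of 0 f] E_zero by simp
end



theorem proposition3p9:
  fixes eA :: "'k::field_char_0 \<Rightarrow> 'a::comm_ring_1"
    and eB :: "'k \<Rightarrow> 'b::comm_ring_1"
    and pi0 :: "'a \<Rightarrow> 'a \<Rightarrow> 'a" and sigma0 :: "'b \<Rightarrow> 'b \<Rightarrow> 'b"
    and phi0 :: "'a \<Rightarrow> 'b"
    and pi :: "'a fps \<Rightarrow> 'a fps \<Rightarrow> 'a fps" and sigma :: "'b fps \<Rightarrow> 'b fps \<Rightarrow> 'b fps"
    and Phi :: "'a fps \<Rightarrow> 'b fps"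
    and D :: "nat \<Rightarrow> 'b \<Rightarrow> 'b"
  assumes algA: "kalg_map eA" and algB: "kalg_map eB"
    and pA: "poisson eA pi0" and pB: "poisson eB sigma0"
    and phi0_hom: "poisson_hom eA eB pi0 sigma0 phi0"
    and pi_def: "fpoisson eA pi" and sigma_def: "fpoisson eB sigma"
    and pi_0: "\<And>x y. fps_nth (pi (fps_const x) (fps_const y)) 0 = pi0 x y"
    and sigma_0: "\<And>x y. fps_nth (sigma (fps_const x) (fps_const y)) 0 = sigma0 x y"
    and Phi_hom: "poisson_hom (fps_map eA) (fps_map eB) pi sigma Phi"
    and Phi_0: "\<And>x. fps_nth (Phi (fps_const x)) 0 = phi0 x"
    and X': "lambda_der eB D"
    and incl: "\<forall>f \<in> fps_over (poisson_commutant sigma0 phi0).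
                 der_exp eB D f \<in> {b. \<forall>a. sigma b (Phi a) = 0}"
  shows "(bij_betw (der_exp eB D) (fps_over (poisson_commutant sigma0 phi0))
            {b. \<forall>a. sigma b (Phi a) = 0}
         \<and> der_exp eB D 1 = 1
         \<and> (\<forall>f \<in> fps_over (poisson_commutant sigma0 phi0). \<forall>g \<in> fps_over (poisson_commutant sigma0 phi0).
              der_exp eB D (f + g) = der_exp eB D f + der_exp eB D g
            \<and> der_exp eB D (f * g) = der_exp eB D f * der_exp eB D g))
       \<and> (\<exists>pi'. poisson_on (fps_over (poisson_commutant sigma0 phi0)) (fps_map eB) pi'
              \<and> (\<forall>f \<in> fps_over (poisson_commutant sigma0 phi0). \<forall>g \<in> fps_over (poisson_commutant sigma0 phi0).
                   der_exp eB D (pi' f g) = sigma (der_exp eB D f) (der_exp eB D g))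
              \<and> (\<forall>pi''. (poisson_on (fps_over (poisson_commutant sigma0 phi0)) (fps_map eB) pi''
                   \<and> (\<forall>f \<in> fps_over (poisson_commutant sigma0 phi0). \<forall>g \<in> fps_over (poisson_commutant sigma0 phi0).
                        der_exp eB D (pi'' f g) = sigma (der_exp eB D f) (der_exp eB D g)))
                 \<longrightarrow> (\<forall>f \<in> fps_over (poisson_commutant sigma0 phi0). \<forall>g \<in> fps_over (poisson_commutant sigma0 phi0).
                        pi'' f g = pi' f g)))"
proof -
  interpret dctx eB D using algB X' by (unfold_locales)
  define A' where "A' = poisson_commutant sigma0 phi0"
  define S where "S = fps_over A'"
  define C where "C = {b. \<forall>a. sigma b (Phi a) = 0}"
  have A'_iff: "x \<in> A' \<longleftrightarrow> (\<forall>a. sigma0 x (phi0 a) = 0)" for x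
    by (simp add: A'_def poisson_commutant_def)
  have A'0: "0 \<in> A'" using pb_zero1[OF pB] by (simp add: A'_iff)
  have A'add: "x + y \<in> A'" if "x \<in> A'" "y \<in> A'" for x y
    using that pb_add1[OF pB] by (simp add: A'_iff)
  have A'mult: "x * y \<in> A'" if "x \<in> A'" "y \<in> A'" for x y
    using that pb_mult1[OF pB] by (simp add: A'_iff)
  have A'scal: "eB k * x \<in> A'" if "x \<in> A'" for k x
    using that pb_scal[OF pB] by (simp add: A'_iff)
  have A'sum: "sum F I \<in> A'" if "\<And>i. i \<in> I \<Longrightarrow> F i \<in> A'" for F and I :: "nat set"
    by (rule sum_closed[where P=A']) (use that A'add A'0 in auto)
  have S_iff: "f \<in> S \<longleftrightarrow> (\<forall>n. f $ n \<in> A')" for f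
    by (simp add: S_def fps_over_def)
  have S0: "0 \<in> S" using A'0 by (simp add: S_iff)
  have Sadd: "f + g \<in> S" if "f \<in> S" "g \<in> S" for f g
    using that A'add by (simp add: S_iff)
  have Smult: "f * g \<in> S" if "f \<in> S" "g \<in> S" for f g
    using that unfolding S_iff fps_mult_nth by (blast intro: A'sum A'mult)
  have Sscal: "fps_map eB k * f \<in> S" if "f \<in> S" for k f
    using that unfolding S_iff fps_mult_nth fps_map_def fps_nth_Abs_fps by (blast intro: A'sum A'scal)
  have SX: "fps_X ^ n * fps_const a \<in> S" if "a \<in> A'" for n a
    using that A'0 by (simp add: S_iff fps_X_power_mult_nth)
  have EC: "E f \<in> C" if "f \<in> S" for f
    using incl that by (simp add: C_def S_def A'_def)
  have Cdiff: "x - z \<in> C" if "x \<in> C" "z \<in> C" for x z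
    using that pb_diff1[OF sigma_def] by (simp add: C_def)
  have Cshift: "h \<in> C" if "fps_X ^ n * h \<in> C" for n h
  proof -
    have "\<forall>a. fps_X ^ n * sigma h (Phi a) = 0"
      using that br_Xpow[OF algB sigma_def] by (simp add: C_def)
    then have "sigma h (Phi a) = 0" for a
      by (metis fps_ext fps_zero_nth fps_X_power_mult_nth add_diff_cancel_right' not_add_less2)
    then show ?thesis by (simp add: C_def)
  qed
  have C0: "h $ 0 \<in> A'" if "h \<in> C" for h
  proof -
    have "sigma0 (h $ 0) (phi0 a) = 0" for a
    proof -
      have "sigma0 (h $ 0) (phi0 a) = sigma (fps_const (h $ 0)) (fps_const (Phi (fps_const a) $ 0)) $ 0"
        by (simp add: sigma_0 Phi_0)
      also have "\<dots> = sigma h (Phi (fps_const a)) $ 0"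
        by (rule br_0[OF algB sigma_def, symmetric])
      also have "\<dots> = 0" using that by (simp add: C_def)
      finally show ?thesis .
    qed
    then show ?thesis by (simp add: A'_iff)
  qed
  have Cbr: "sigma x y \<in> C" if "x \<in> C" "y \<in> C" for x y
  proof -
    have "sigma (sigma x y) (Phi a) = 0" for a
    proof -
      have j: "sigma x (sigma y (Phi a)) + sigma y (sigma (Phi a) x) + sigma (Phi a) (sigma x y) = 0"
        by (rule pb_jac[OF sigma_def])
      have "sigma (Phi a) x = 0" using that pb_anti[OF sigma_def, of "Phi a" x] by (simp add: C_def)
      then have "sigma (Phi a) (sigma x y) = 0"
        using j that by (simp add: C_def pb_zero2[OF sigma_def])
      then show ?thesis using pb_anti[OF sigma_def, of "sigma x y" "Phi a"] by simp
    qed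
    then show ?thesis by (simp add: C_def)
  qed
  have img: "E ` S = C"
  proof
    show "E ` S \<subseteq> C" using EC by blast
    show "C \<subseteq> E ` S"
    proof
      fix y assume "y \<in> C"
      have "\<exists>b\<in>fps_over A'. E b = y"
        by (rule E_surj[where C=C]) (use EC Cdiff Cshift C0 Sadd SX S0 \<open>y \<in> C\<close> in \<open>auto simp: S_def\<close>)
      then show "y \<in> E ` S" by (auto simp: S_def)
    qed
  qed
  have bij: "bij_betw E S C"
    unfolding bij_betw_def using img E_inj by (auto intro: inj_onI)
  define pi' where "pi' f g = inv_into S E (sigma (E f) (E g))" for f g
  have pi'S: "pi' f g \<in> S" and Epi': "E (pi' f g) = sigma (E f) (E g)" if "f \<in> S" "g \<in> S" for f g
  proof -
    have "sigma (E f) (E g) \<in> E ` S" using img Cbr EC that by simp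
    then show "pi' f g \<in> S" "E (pi' f g) = sigma (E f) (E g)"
      unfolding pi'_def by (auto intro: inv_into_into f_inv_into_f)
  qed
  have pois: "poisson_on S (fps_map eB) pi'"
    unfolding poisson_on_def
  proof (intro conjI ballI allI)
    fix x y assume "x \<in> S" "y \<in> S"
    then show "pi' x y \<in> S" by (rule pi'S)
  next
    fix x y z assume xyz: "x \<in> S" "y \<in> S" "z \<in> S"
    show "pi' (x + y) z = pi' x z + pi' y z"
      by (rule E_inj) (simp add: xyz Sadd Epi' E_add pb_add1[OF sigma_def])
  next
    fix k x y assume xy: "x \<in> S" "y \<in> S"
    show "pi' (fps_map eB k * x) y = fps_map eB k * pi' x y"
      by (rule E_inj) (simp add: xy Sscal Epi' E_mult E_scal pb_scal[OF sigma_def])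
  next
    fix x y assume xy: "x \<in> S" "y \<in> S"
    show "pi' x y = - pi' y x"
      by (rule E_inj) (simp add: xy Epi' E_neg pb_anti[OF sigma_def, of "E x"])
  next
    fix x y z assume xyz: "x \<in> S" "y \<in> S" "z \<in> S"
    show "pi' x (pi' y z) + pi' y (pi' z x) + pi' z (pi' x y) = 0"
      by (rule E_inj) (simp add: xyz pi'S Epi' E_add E_zero pb_jac[OF sigma_def])
  next
    fix x y z assume xyz: "x \<in> S" "y \<in> S" "z \<in> S"
    show "pi' x (y * z) = pi' x y * z + y * pi' x z"
      by (rule E_inj) (simp add: xyz Smult Epi' E_add E_mult pb_leib[OF sigma_def])
  qed
  have uniq: "\<forall>f\<in>S. \<forall>g\<in>S. pi'' f g = pi' f g"
    if "\<forall>f\<in>S. \<forall>g\<in>S. E (pi'' f g) = sigma (E f) (E g)" for pi''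
    using that Epi' E_inj by metis
  show ?thesis
    using bij E_one E_add E_mult pois Epi' uniq
    unfolding S_def C_def A'_def
    by blast
qed

end
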